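(* Let $\mathcal S=\{1,\dots,S\}$ be a finite state space, let $X=(X_t)_{t\in\mathbb N}$ be a discrete-time process with values in $\mathcal S$, and let $\boldsymbol Z$ be a random covariate vector (not depending on $t$) with support $\mathcal Z$. Assume: (i) for every $\boldsymbol z\in\mathcal Z$, conditionally on $\boldsymbol Z=\boldsymbol z$, $X$ is a homogeneous, irreducible and aperiodic Markov chain of order 1 with transition probabilities $p_{ij}(\boldsymbol z)=\mathbb P(X_{t+1}=j\mid X_t=i,\boldsymbol Z=\boldsymbol z)$ for all $t\in\mathbb N$, $i,j\in\mathcal S$, and transition matrix $\boldsymbol P(\boldsymbol z)=(p_{ij}(\boldsymbol z))_{i,j}$; (ii) $T_0$ is not random, and $0\le T_0<T_1<T_2<\cdots$ are integer observation times with gaps $\tau_k=T_k-T_{k-1}\in\mathbb N^*$, $k\ge1$; set $Y_k=X_{T_k}$; (iii) the sequence $(\tau_k)_{k\ge1}$ is conditionally independent of $X$ given $\boldsymbol Z$; (iv) for every $\boldsymbol z\in\mathcal Z$, the positive integer-valued variables $\tau_k$, $k\ge1$, are conditionally independent and have the same conditional distribution given $\boldsymbol Z=\boldsymbol z$. Then: (a) for every integer $k\ge1$, $\boldsymbol z\in\mathcal Z$, $i_{k-1},\dots,i_1\in\mathcal S$, $\ell'_k,\dots,\ell'_1\in\mathbb N^*$, and all $i,j\in\mathcal S$, $\ell\in\mathbb N^*$, $$\mathbb P(Y_{k+1}=j,\tau_{k+1}=\ell\mid Y_k=i,\tau_k=\ell'_k,Y_{k-1}=i_{k-1},\tau_{k-1}=\ell'_{k-1},\dots,Y_1=i_1,\tau_1=\ell'_1,\boldsymbol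 Z=\boldsymbol z)=\mathbb P(Y_{k+1}=j,\tau_{k+1}=\ell\mid Y_k=i,\boldsymbol Z=\boldsymbol z);$$ (b) for every $\boldsymbol z\in\mathcal Z$, all integers $t<t'$, all $k\in\mathbb N$ and $i,j\in\mathcal S$, $$\mathbb P(X_{T_{k+1}}=j\mid X_{T_k}=i,T_{k+1}=t',T_k=t,\boldsymbol Z=\boldsymbol z)=\big(\boldsymbol P^{t'-t}(\boldsymbol z)\big)_{ij};$$ (c) for every $\boldsymbol z\in\mathcal Z$, the conditional distribution of $\tau_{k+1}$ given $Y_k$ and $\boldsymbol Z=\boldsymbol z$ is the same for all $k\in\mathbb N$.
   Context: $\boldsymbol P^{m}(\boldsymbol z)$ denotes the $m$-th matrix power of $\boldsymbol P(\boldsymbol z)$. Conditional probabilities given $\boldsymbol Z=\boldsymbol z$ are understood for $\boldsymbol z$ in the support of $\boldsymbol Z$. *)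

theory Defs
  imports "HOL-Probability.Probability"
begin

definition cprob :: "'a measure \<Rightarrow> 'a set \<Rightarrow> 'a set \<Rightarrow> real" where
  "cprob M A B = measure M (A \<inter> B) / measure M B"

fun mpow :: "('s::finite \<Rightarrow> 's \<Rightarrow> real) \<Rightarrow> nat \<Rightarrow> 's \<Rightarrow> 's \<Rightarrow> real" where
  "mpow P 0 = (\<lambda>i j. if i = j then 1 else 0)"
| "mpow P (Suc m) = (\<lambda>i j. \<Sum>k\<in>UNIV. mpow P m i k * P k j)"

definition stochastic_matrix :: "('s::finite \<Rightarrow> 's \<Rightarrow> real) \<Rightarrow> bool" where
  "stochastic_matrix P \<longleftrightarrow> (\<forall>i j. 0 \<le> P i j) \<and> (\<forall>i. (\<Sum>j\<in>UNIV. P i j) = 1)"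

definition hom_markov1 :: "'a measure \<Rightarrow> (nat \<Rightarrow> 'a \<Rightarrow> 's::finite) \<Rightarrow> ('s \<Rightarrow> 's \<Rightarrow> real) \<Rightarrow> bool" where
  "hom_markov1 M X P \<longleftrightarrow> stochastic_matrix P \<and>
     (\<forall>t (h::nat \<Rightarrow> 's) j. measure M {\<omega>\<in>space M. \<forall>s\<le>t. X s \<omega> = h s} > 0 \<longrightarrow>
        cprob M {\<omega>\<in>space M. X (Suc t) \<omega> = j} {\<omega>\<in>space M. \<forall>s\<le>t. X s \<omega> = h s} = P (h t) j)"

definition irreducible_mat :: "('s::finite \<Rightarrow> 's \<Rightarrow> real) \<Rightarrow> bool" where
  "irreducible_mat P \<longleftrightarrow> (\<forall>i j. \<exists>n. mpow P n i j > 0)"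

definition aperiodic_mat :: "('s::finite \<Rightarrow> 's \<Rightarrow> real) \<Rightarrow> bool" where
  "aperiodic_mat P \<longleftrightarrow> (\<forall>i. Gcd {n. 0 < n \<and> mpow P n i i > 0} = 1)"

definition obs_time :: "nat \<Rightarrow> (nat \<Rightarrow> 'a \<Rightarrow> nat) \<Rightarrow> nat \<Rightarrow> 'a \<Rightarrow> nat" where
  "obs_time t0 \<tau> k \<omega> = t0 + (\<Sum>m\<in>{1..k}. \<tau> m \<omega>)"

end

theory Submission
  imports Defs
begin


lemma sets_PiM_countable_finite:
  fixes F :: "'i set"
  assumes "finite F"
  shows "S \<inter> space (Pi\<^sub>M F (\<lambda>_. count_space (UNIV::'b::countable set))) \<in> sets (Pi\<^sub>M F (\<lambda>_. count_space (UNIV::'b set)))"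
proof -
  let ?E = "S \<inter> Pi\<^sub>E F (\<lambda>_. UNIV::'b set)"
  have c: "countable ?E"
    using countable_PiE[OF assms, of "\<lambda>_. UNIV::'b set"] by (rule countable_subset[rotated]) auto
  have eq: "?E = (\<Union>c\<in>?E. Pi\<^sub>E F (\<lambda>i. {c i}))"
    apply (auto simp: PiE_def extensional_def Pi_def)
    subgoal for x c by (metis ext)
    done
  have "(\<Union>c\<in>?E. Pi\<^sub>E F (\<lambda>i. {c i})) \<in> sets (Pi\<^sub>M F (\<lambda>_. count_space (UNIV::'b set)))"
    using c assms by (intro sets.countable_UN') auto
  then show ?thesis using eq by (simp add: space_PiM)
qed

lemma restrict_eq_ext_iff:
  "c \<in> extensional A \<Longrightarrow> (restrict f A = c) \<longleftrightarrow> (\<forall>m\<in>A. f m = c m)"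
  by (auto simp: extensional_def fun_eq_iff restrict_def)

lemma sum_restrict_sub: "B \<subseteq> A \<Longrightarrow> sum (restrict f A) B = sum f B"
  by (rule sum.cong) auto

lemma (in prob_space) PROPc:
  assumes I: "countable I"
    and A: "\<And>i. i \<in> I \<Longrightarrow> A i \<in> events" and B: "\<And>i. i \<in> I \<Longrightarrow> B i \<in> events"
    and dA: "disjoint_family_on A I" and dB: "disjoint_family_on B I"
    and eq: "\<And>i. i \<in> I \<Longrightarrow> prob (A i) = c * prob (B i)" and c: "c \<ge> 0"
  shows "prob (\<Union>i\<in>I. A i) = c * prob (\<Union>i\<in>I. B i)"
proof -
  have "ennreal (prob (\<Union>i\<in>I. A i)) = emeasure M (\<Union>i\<in>I. A i)"
    by (simp add: emeasure_eq_measure)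
  also have "\<dots> = (\<integral>\<^sup>+i. emeasure M (A i) \<partial>count_space I)"
    by (rule emeasure_UN_countable[OF A I dA])
  also have "\<dots> = (\<integral>\<^sup>+i. ennreal c * emeasure M (B i) \<partial>count_space I)"
    by (intro nn_integral_cong) (simp add: emeasure_eq_measure eq ennreal_mult c)
  also have "\<dots> = ennreal c * (\<integral>\<^sup>+i. emeasure M (B i) \<partial>count_space I)"
    by (rule nn_integral_cmult) simp
  also have "\<dots> = ennreal c * emeasure M (\<Union>i\<in>I. B i)"
    by (simp add: emeasure_UN_countable[OF B I dB])
  also have "\<dots> = ennreal (c * prob (\<Union>i\<in>I. B i))"
    by (simp add: emeasure_eq_measure ennreal_mult c)
  finally show ?thesis by (subst (asm) ennreal_inj) (auto simp: c)
qed

lemma mpow_nonneg: "stochastic_matrix P \<Longrightarrow> 0 \<le> mpow P n i j"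
  by (induction n arbitrary: j) (auto simp: stochastic_matrix_def intro!: sum_nonneg)



locale LS = prob_space Q for Q :: "'a measure" +
  fixes X :: "nat \<Rightarrow> 'a \<Rightarrow> 's::finite" and \<tau> :: "nat \<Rightarrow> 'a \<Rightarrow> nat" and P :: "'s \<Rightarrow> 's \<Rightarrow> real"
  assumes Xm: "\<And>t. X t \<in> measurable Q (count_space UNIV)"
    and \<tau>m: "\<And>k. \<tau> k \<in> measurable Q (count_space UNIV)"
    and markov: "hom_markov1 Q X P"
    and indepX: "indep_set
         {(\<lambda>\<omega>. restrict (\<lambda>k. \<tau> k \<omega>) {1..}) -` A \<inter> space Q | A. A \<in> sets (Pi\<^sub>M {1..} (\<lambda>_. count_space (UNIV::nat set)))}
         {(\<lambda>\<omega> t. X t \<omega>) -` B \<inter> space Q | B. B \<in> sets (Pi\<^sub>M (UNIV::nat set) (\<lambda>_. count_space (UNIV::'s set)))}"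
    and indeptau: "indep_vars (\<lambda>_. count_space UNIV) \<tau> {1..}"
begin

definition XE :: "nat \<Rightarrow> (nat \<Rightarrow> 's) set \<Rightarrow> 'a set" where
  "XE u S = {\<omega>\<in>space Q. restrict (\<lambda>s. X s \<omega>) {..u} \<in> S}"

definition TE :: "nat \<Rightarrow> (nat \<Rightarrow> nat) set \<Rightarrow> 'a set" where
  "TE n S = {\<omega>\<in>space Q. restrict (\<lambda>m. \<tau> m \<omega>) {1..n} \<in> S}"

lemma XE_sets[measurable]: "XE u S \<in> events"
proof -
  have "XE u S = (\<lambda>\<omega>. restrict (\<lambda>s. X s \<omega>) {..u}) -` (S \<inter> space (Pi\<^sub>M {..u} (\<lambda>_. count_space (UNIV::'s set)))) \<inter> space Q"
    by (auto simp: XE_def space_PiM)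
  also have "\<dots> \<in> events"
    by (rule measurable_sets[OF measurable_restrict[OF Xm] sets_PiM_countable_finite]) simp
  finally show ?thesis .
qed

lemma TE_sets[measurable]: "TE n S \<in> events"
proof -
  have "TE n S = (\<lambda>\<omega>. restrict (\<lambda>m. \<tau> m \<omega>) {1..n}) -` (S \<inter> space (Pi\<^sub>M {1..n} (\<lambda>_. count_space (UNIV::nat set)))) \<inter> space Q"
    by (auto simp: TE_def space_PiM)
  also have "\<dots> \<in> events"
    by (rule measurable_sets[OF measurable_restrict[OF \<tau>m] sets_PiM_countable_finite]) simp
  finally show ?thesis .
qed

lemma indep_TX: "prob (TE n S \<inter> XE u R) = prob (TE n S) * prob (XE u R)"
proof (rule indep_setD[OF indepX])
  let ?A = "(\<lambda>f. restrict f {1..n}) -` (S \<inter> space (Pi\<^sub>M {1..n} (\<lambda>_. count_space (UNIV::nat set)))) \<inter> space (Pi\<^sub>M {1..} (\<lambda>_. count_space (UNIV::nat set)))"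
  have "?A \<in> sets (Pi\<^sub>M {1..} (\<lambda>_. count_space (UNIV::nat set)))"
    by (rule measurable_sets[OF measurable_restrict_subset sets_PiM_countable_finite]) auto
  moreover have "TE n S = (\<lambda>\<omega>. restrict (\<lambda>k. \<tau> k \<omega>) {1..}) -` ?A \<inter> space Q"
    by (auto simp: TE_def space_PiM Int_absorb1)
  ultimately show "TE n S \<in> {(\<lambda>\<omega>. restrict (\<lambda>k. \<tau> k \<omega>) {1..}) -` A \<inter> space Q | A. A \<in> sets (Pi\<^sub>M {1..} (\<lambda>_. count_space (UNIV::nat set)))}"
    by blast
  let ?B = "(\<lambda>f. restrict f {..u}) -` (R \<inter> space (Pi\<^sub>M {..u} (\<lambda>_. count_space (UNIV::'s set)))) \<inter> space (Pi\<^sub>M UNIV (\<lambda>_. count_space (UNIV::'s set)))"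
  have "?B \<in> sets (Pi\<^sub>M UNIV (\<lambda>_. count_space (UNIV::'s set)))"
    by (rule measurable_sets[OF measurable_restrict_subset sets_PiM_countable_finite]) auto
  moreover have "XE u R = (\<lambda>\<omega> t. X t \<omega>) -` ?B \<inter> space Q"
    by (auto simp: XE_def space_PiM)
  ultimately show "XE u R \<in> {(\<lambda>\<omega> t. X t \<omega>) -` B \<inter> space Q | B. B \<in> sets (Pi\<^sub>M (UNIV::nat set) (\<lambda>_. count_space (UNIV::'s set)))}"
    by blast
qed

end

context LS begin

lemma TE_single: "c \<in> Pi\<^sub>E {1..n} (\<lambda>_. UNIV) \<Longrightarrow> TE n {c} = {\<omega>\<in>space Q. \<forall>m\<in>{1..n}. \<tau> m \<omega> = c m}"
  by (auto simp: TE_def restrict_eq_ext_iff PiE_def)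

lemma tau_prod:
  assumes c: "c \<in> Pi\<^sub>E {1..n} (\<lambda>_. UNIV)"
  shows "prob (TE n {c}) = (\<Prod>m\<in>{1..n}. prob {\<omega>\<in>space Q. \<tau> m \<omega> = c m})"
proof (cases "n = 0")
  case True
  then have "TE n {c} = space Q" using TE_single[OF c] by simp
  then show ?thesis using True by (simp add: prob_space)
next
  case False
  have ind: "indep_sets (\<lambda>i. { \<tau> i -` A \<inter> space Q | A. A \<in> sets (count_space UNIV)}) {1..}"
    using indeptau unfolding indep_vars_def2 by simp
  have eq: "TE n {c} = (\<Inter>m\<in>{1..n}. \<tau> m -` {c m} \<inter> space Q)"
    using False by (auto simp: TE_single[OF c])
  have "prob (\<Inter>m\<in>{1..n}. \<tau> m -` {c m} \<inter> space Q) = (\<Prod>m\<in>{1..n}. prob (\<tau> m -` {c m} \<inter> space Q))"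
    by (rule indep_setsD[OF ind]) (use False in auto)
  moreover have "\<And>m. \<tau> m -` {c m} \<inter> space Q = {\<omega>\<in>space Q. \<tau> m \<omega> = c m}" by auto
  ultimately show ?thesis using eq by simp
qed

lemma F2: "prob (TE k S \<inter> {\<omega>\<in>space Q. \<tau> (Suc k) \<omega> = l}) = prob (TE k S) * prob {\<omega>\<in>space Q. \<tau> (Suc k) \<omega> = l}"
proof -
  let ?I = "S \<inter> Pi\<^sub>E {1..k} (\<lambda>_. UNIV::nat set)"
  let ?L = "{\<omega>\<in>space Q. \<tau> (Suc k) \<omega> = l}"
  have Lev: "?L \<in> events" using \<tau>m by measurable
  have cI: "countable ?I"
    using countable_PiE[of "{1..k}" "\<lambda>_. UNIV::nat set"] by (rule countable_subset[rotated]) auto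
  have U1: "TE k S \<inter> ?L = (\<Union>c\<in>?I. TE k {c} \<inter> ?L)"
    by (auto simp: TE_def)
  have U2: "TE k S = (\<Union>c\<in>?I. TE k {c})"
    by (auto simp: TE_def)
  have "prob (\<Union>c\<in>?I. TE k {c} \<inter> ?L) = prob ?L * prob (\<Union>c\<in>?I. TE k {c})"
  proof (rule PROPc[OF cI])
    fix c assume cI: "c \<in> ?I"
    then have c: "c \<in> Pi\<^sub>E {1..k} (\<lambda>_. UNIV)" by blast
    have c': "c(Suc k := l) \<in> Pi\<^sub>E {1..Suc k} (\<lambda>_. UNIV)"
      using c by (auto simp: PiE_def extensional_def)
    have "TE k {c} \<inter> ?L = TE (Suc k) {c(Suc k := l)}"
      unfolding TE_single[OF c] TE_single[OF c'] by (auto simp: le_Suc_eq)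
    then have "prob (TE k {c} \<inter> ?L) = (\<Prod>m\<in>{1..Suc k}. prob {\<omega>\<in>space Q. \<tau> m \<omega> = (c(Suc k := l)) m})"
      using tau_prod[OF c'] by simp
    also have "\<dots> = prob ?L * (\<Prod>m\<in>{1..k}. prob {\<omega>\<in>space Q. \<tau> m \<omega> = (c(Suc k := l)) m})"
      by (simp add: atLeastAtMostSuc_conv)
    also have "(\<Prod>m\<in>{1..k}. prob {\<omega>\<in>space Q. \<tau> m \<omega> = (c(Suc k := l)) m}) = prob (TE k {c})"
      unfolding tau_prod[OF c] by (rule prod.cong) auto
    finally show "prob (TE k {c} \<inter> ?L) = prob ?L * prob (TE k {c})" .
  next
    show "disjoint_family_on (\<lambda>c. TE k {c} \<inter> ?L) ?I" "disjoint_family_on (\<lambda>c. TE k {c}) ?I"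
      by (auto simp: disjoint_family_on_def TE_def)
  qed (use Lev in auto)
  then show ?thesis using U1 U2 by (simp add: mult.commute)
qed

end

context LS begin

lemma XE_single: "h \<in> Pi\<^sub>E {..u} (\<lambda>_. UNIV) \<Longrightarrow> XE u {h} = {\<omega>\<in>space Q. \<forall>s\<le>u. X s \<omega> = h s}"
  by (auto simp: XE_def restrict_eq_ext_iff PiE_def)

lemma Xev[measurable]: "{\<omega>\<in>space Q. X t \<omega> = j} \<in> events"
  using Xm by measurable

lemma stoch: "stochastic_matrix P" using markov by (simp add: hom_markov1_def)

lemma onestep:
  assumes S: "\<forall>h\<in>S. h u = k"
  shows "prob (XE u S \<inter> {\<omega>\<in>space Q. X (Suc u) \<omega> = j}) = P k j * prob (XE u S)"
proof -
  let ?I = "S \<inter> Pi\<^sub>E {..u} (\<lambda>_. UNIV::'s set)"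
  let ?L = "{\<omega>\<in>space Q. X (Suc u) \<omega> = j}"
  have cI: "countable ?I"
    by (intro countable_finite finite_Int disjI2 finite_PiE) auto
  have U1: "XE u S \<inter> ?L = (\<Union>h\<in>?I. XE u {h} \<inter> ?L)"
    by (auto simp: XE_def)
  have U2: "XE u S = (\<Union>h\<in>?I. XE u {h})"
    by (auto simp: XE_def)
  have "prob (\<Union>h\<in>?I. XE u {h} \<inter> ?L) = P k j * prob (\<Union>h\<in>?I. XE u {h})"
  proof (rule PROPc[OF cI])
    fix h assume hI: "h \<in> ?I"
    then have h: "h \<in> Pi\<^sub>E {..u} (\<lambda>_. UNIV)" and hu: "h u = k" using S by auto
    show "prob (XE u {h} \<inter> ?L) = P k j * prob (XE u {h})"
    proof (cases "prob (XE u {h}) > 0")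
      case True
      then have "cprob Q ?L (XE u {h}) = P (h u) j"
        using markov unfolding hom_markov1_def XE_single[OF h] by blast
      then show ?thesis using True hu by (simp add: cprob_def field_simps Int_commute)
    next
      case False
      then have z: "prob (XE u {h}) = 0" using measure_nonneg[of Q] by (meson not_less order.antisym)
      have "prob (XE u {h} \<inter> ?L) \<le> prob (XE u {h})"
        by (rule finite_measure_mono) auto
      then show ?thesis using z measure_nonneg[of Q] by (simp add: order.antisym)
    qed
  next
    show "disjoint_family_on (\<lambda>h. XE u {h} \<inter> ?L) ?I" "disjoint_family_on (\<lambda>h. XE u {h}) ?I"
      by (auto simp: disjoint_family_on_def XE_def)
    show "0 \<le> P k j" using stoch by (simp add: stochastic_matrix_def)
  qed auto
  then show ?thesis using U1 U2 by simp
qed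

lemma multistep:
  assumes S: "\<forall>h\<in>S. h t = i"
  shows "prob (XE t S \<inter> {\<omega>\<in>space Q. X (t + l) \<omega> = j}) = mpow P l i j * prob (XE t S)"
proof (induction l arbitrary: j)
  case 0
  show ?case
  proof (cases "i = j")
    case True
    then have "XE t S \<inter> {\<omega>\<in>space Q. X (t + 0) \<omega> = j} = XE t S"
      using S by (auto simp: XE_def)
    then show ?thesis using True by simp
  next
    case False
    then have "XE t S \<inter> {\<omega>\<in>space Q. X (t + 0) \<omega> = j} = {}"
      using S by (auto simp: XE_def)
    then show ?thesis using False by simp
  qed
next
  case (Suc l)
  define Sk where "Sk k = {h. restrict h {..t} \<in> S \<and> h (t+l) = k}" for k
  have int: "{..t+l} \<inter> {..t} = {..t}" by auto
  have XSk: "XE (t+l) (Sk k) = XE t S \<inter> {\<omega>\<in>space Q. X (t + l) \<omega> = k}" for k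
    by (auto simp: XE_def Sk_def int)
  have U: "XE t S \<inter> {\<omega>\<in>space Q. X (t + Suc l) \<omega> = j} = (\<Union>k\<in>UNIV. XE (t+l) (Sk k) \<inter> {\<omega>\<in>space Q. X (Suc (t+l)) \<omega> = j})"
    by (auto simp: XSk)
  have "prob (\<Union>k\<in>UNIV. XE (t+l) (Sk k) \<inter> {\<omega>\<in>space Q. X (Suc (t+l)) \<omega> = j})
        = (\<Sum>k\<in>UNIV. prob (XE (t+l) (Sk k) \<inter> {\<omega>\<in>space Q. X (Suc (t+l)) \<omega> = j}))"
    apply (rule measure_finite_Union)
    subgoal by simp
    subgoal using XE_sets Xev by blast
    subgoal by (auto simp: disjoint_family_on_def Sk_def XE_def)
    subgoal by (simp add: emeasure_eq_measure)
    done
  also have "\<dots> = (\<Sum>k\<in>UNIV. P k j * (mpow P l i k * prob (XE t S)))"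
  proof (rule sum.cong[OF refl])
    fix k
    have "\<forall>h\<in>Sk k. h (t+l) = k" by (simp add: Sk_def)
    from onestep[OF this, of j] show "prob (XE (t+l) (Sk k) \<inter> {\<omega>\<in>space Q. X (Suc (t+l)) \<omega> = j}) = P k j * (mpow P l i k * prob (XE t S))"
      by (simp add: XSk Suc.IH)
  qed
  also have "\<dots> = mpow P (Suc l) i j * prob (XE t S)"
    by (simp add: sum_distrib_left mult_ac)
  finally show ?case using U by simp
qed

end

context LS begin

lemma XE_pt: "{\<omega>\<in>space Q. X t \<omega> = i} = XE t {h. h t = i}"
  by (auto simp: XE_def)

lemma partb:
  assumes tt: "t < t'"
    and pos: "prob {\<omega>\<in>space Q. X (obs_time t0 \<tau> k \<omega>) \<omega> = i \<and> obs_time t0 \<tau> (Suc k) \<omega> = t' \<and> obs_time t0 \<tau> k \<omega> = t} > 0"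
  shows "cprob Q {\<omega>\<in>space Q. X (obs_time t0 \<tau> (Suc k) \<omega>) \<omega> = j}
                 {\<omega>\<in>space Q. X (obs_time t0 \<tau> k \<omega>) \<omega> = i \<and> obs_time t0 \<tau> (Suc k) \<omega> = t' \<and> obs_time t0 \<tau> k \<omega> = t}
         = mpow P (t' - t) i j"
proof -
  define ET where "ET = TE (Suc k) {c. t0 + sum c {1..k} = t \<and> t0 + sum c {1..Suc k} = t'}"
  have sub: "{1..k} \<subseteq> {1..Suc k}" by auto
  have D: "{\<omega>\<in>space Q. X (obs_time t0 \<tau> k \<omega>) \<omega> = i \<and> obs_time t0 \<tau> (Suc k) \<omega> = t' \<and> obs_time t0 \<tau> k \<omega> = t}
       = ET \<inter> XE t {h. h t = i}"
    by (auto simp: ET_def TE_def XE_def obs_time_def sum_restrict_sub[OF sub] simp del: sum.atLeast_Suc_atMost_Suc_shift)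
  have N: "{\<omega>\<in>space Q. X (obs_time t0 \<tau> (Suc k) \<omega>) \<omega> = j} \<inter> (ET \<inter> XE t {h. h t = i})
       = ET \<inter> (XE t {h. h t = i} \<inter> {\<omega>\<in>space Q. X (t + (t' - t)) \<omega> = j})"
    using tt by (auto simp: ET_def TE_def XE_def obs_time_def sum_restrict_sub[OF sub] simp del: sum.atLeast_Suc_atMost_Suc_shift)
  have X2: "XE t {h. h t = i} \<inter> {\<omega>\<in>space Q. X (t + (t' - t)) \<omega> = j} = XE t' {h. h t = i \<and> h t' = j}"
    using tt by (auto simp: XE_def)
  have m: "prob (XE t {h. h t = i} \<inter> {\<omega>\<in>space Q. X (t + (t' - t)) \<omega> = j}) = mpow P (t' - t) i j * prob (XE t {h. h t = i})"
    by (rule multistep) simp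
  have "prob (ET \<inter> XE t {h. h t = i}) > 0" using pos D by simp
  then have "prob ET \<noteq> 0" "prob (XE t {h. h t = i}) \<noteq> 0" unfolding ET_def indep_TX by auto
  moreover have "cprob Q {\<omega>\<in>space Q. X (obs_time t0 \<tau> (Suc k) \<omega>) \<omega> = j}
                 {\<omega>\<in>space Q. X (obs_time t0 \<tau> k \<omega>) \<omega> = i \<and> obs_time t0 \<tau> (Suc k) \<omega> = t' \<and> obs_time t0 \<tau> k \<omega> = t}
     = prob (ET \<inter> XE t' {h. h t = i \<and> h t' = j}) / prob (ET \<inter> XE t {h. h t = i})"
    unfolding cprob_def D N X2 ..
  ultimately show ?thesis
    unfolding ET_def indep_TX using m X2 by simp
qed

end

context LS begin

lemma TE_Suc: "TE k S \<inter> {\<omega>\<in>space Q. \<tau> (Suc k) \<omega> = l} = TE (Suc k) {c. restrict c {1..k} \<in> S \<and> c (Suc k) = l}"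
proof -
  have "{1..Suc k} \<inter> {1..k} = {1..k}" by auto
  then show ?thesis by (auto simp: TE_def)
qed

lemma XE_add: "XE u S \<inter> {\<omega>\<in>space Q. X (u + l) \<omega> = j} = XE (u + l) {h. restrict h {..u} \<in> S \<and> h (u + l) = j}"
proof -
  have "{..u + l} \<inter> {..u} = {..u}" by auto
  then show ?thesis by (auto simp: XE_def)
qed

lemma Lev[measurable]: "{\<omega>\<in>space Q. \<tau> k \<omega> = l} \<in> events"
  using \<tau>m by measurable

lemma indep3: "prob ((TE k S \<inter> {\<omega>\<in>space Q. \<tau> (Suc k) \<omega> = l}) \<inter> XE u R)
   = prob (TE k S) * prob {\<omega>\<in>space Q. \<tau> (Suc k) \<omega> = l} * prob (XE u R)"
  unfolding TE_Suc indep_TX unfolding TE_Suc[symmetric] F2 ..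

definition ST where "ST t0 k t = {c. t0 + sum c {1..k} = t}"

lemma Ydecomp: "{\<omega>\<in>space Q. X (obs_time t0 \<tau> k \<omega>) \<omega> = i} = (\<Union>t. TE k (ST t0 k t) \<inter> XE t {h. h t = i})"
  by (auto simp: TE_def XE_def ST_def obs_time_def sum_restrict_sub)

lemma Ydisj: "disjoint_family (\<lambda>t. TE k (ST t0 k t) \<inter> R t)"
  by (auto simp: disjoint_family_on_def TE_def ST_def sum_restrict_sub)

lemma partc:
  assumes pos: "prob {\<omega>\<in>space Q. X (obs_time t0 \<tau> k \<omega>) \<omega> = i} > 0"
  shows "cprob Q {\<omega>\<in>space Q. \<tau> (Suc k) \<omega> = l} {\<omega>\<in>space Q. X (obs_time t0 \<tau> k \<omega>) \<omega> = i}
       = prob {\<omega>\<in>space Q. \<tau> (Suc k) \<omega> = l}"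
proof -
  let ?L = "{\<omega>\<in>space Q. \<tau> (Suc k) \<omega> = l}"
  let ?B = "\<lambda>t. TE k (ST t0 k t) \<inter> XE t {h. h t = i}"
  let ?A = "\<lambda>t. (TE k (ST t0 k t) \<inter> ?L) \<inter> XE t {h. h t = i}"
  have U: "?L \<inter> {\<omega>\<in>space Q. X (obs_time t0 \<tau> k \<omega>) \<omega> = i} = (\<Union>t. ?A t)"
    unfolding Ydecomp by blast
  have "prob (\<Union>t\<in>UNIV. ?A t) = prob ?L * prob (\<Union>t\<in>UNIV. ?B t)"
  proof (rule PROPc)
    show "disjoint_family_on ?A UNIV"
      using Ydisj[of k t0 "\<lambda>t. ?L \<inter> XE t {h. h t = i}"] by (simp add: Int_assoc)
    show "disjoint_family_on ?B UNIV" by (rule Ydisj)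
    fix t show "prob (?A t) = prob ?L * prob (?B t)"
      unfolding indep3 indep_TX by simp
  qed auto
  then show ?thesis unfolding cprob_def U using pos Ydecomp by simp
qed

end

context LS begin

lemma obs_Suc: "obs_time t0 \<tau> (Suc k) \<omega> = obs_time t0 \<tau> k \<omega> + \<tau> (Suc k) \<omega>"
  by (simp add: obs_time_def)

lemma Yev: "{\<omega>\<in>space Q. X (obs_time t0 \<tau> k \<omega>) \<omega> = i} \<in> events"
  unfolding Ydecomp by (intro sets.countable_UN) auto

lemma parta:
  assumes k: "k \<ge> 1"
    and pos: "prob {\<omega>\<in>space Q. \<forall>m\<in>{1..k}. X (obs_time t0 \<tau> m \<omega>) \<omega> = ih m \<and> \<tau> m \<omega> = l' m} > 0"
  shows "cprob Q {\<omega>\<in>space Q. X (obs_time t0 \<tau> (Suc k) \<omega>) \<omega> = j \<and> \<tau> (Suc k) \<omega> = l}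
                 {\<omega>\<in>space Q. \<forall>m\<in>{1..k}. X (obs_time t0 \<tau> m \<omega>) \<omega> = ih m \<and> \<tau> m \<omega> = l' m}
       = cprob Q {\<omega>\<in>space Q. X (obs_time t0 \<tau> (Suc k) \<omega>) \<omega> = j \<and> \<tau> (Suc k) \<omega> = l}
                 {\<omega>\<in>space Q. X (obs_time t0 \<tau> k \<omega>) \<omega> = ih k}"
proof -
  let ?L = "{\<omega>\<in>space Q. \<tau> (Suc k) \<omega> = l}"
  let ?Num = "{\<omega>\<in>space Q. X (obs_time t0 \<tau> (Suc k) \<omega>) \<omega> = j \<and> \<tau> (Suc k) \<omega> = l}"
  let ?H = "{\<omega>\<in>space Q. \<forall>m\<in>{1..k}. X (obs_time t0 \<tau> m \<omega>) \<omega> = ih m \<and> \<tau> m \<omega> = l' m}"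
  let ?Y = "{\<omega>\<in>space Q. X (obs_time t0 \<tau> k \<omega>) \<omega> = ih k}"
  define c where "c = prob ?L * mpow P l (ih k) j"
  have c0: "c \<ge> 0" unfolding c_def using mpow_nonneg[OF stoch] by simp
  define s where "s m = t0 + sum l' {1..m}" for m
  define S1 where "S1 = {c. \<forall>m\<in>{1..k}. c m = l' (m::nat)}"
  define Sx where "Sx = {h. \<forall>m\<in>{1..k}. h (s m) = ih m}"
  have smono: "m \<le> k \<Longrightarrow> s m \<le> s k" for m
    unfolding s_def by (auto intro!: sum_mono2)
  have obs: "obs_time t0 \<tau> m \<omega> = s m" if "\<forall>m\<in>{1..k}. \<tau> m \<omega> = l' m" "m \<le> k" for m \<omega>
    unfolding obs_time_def s_def using that by (auto intro!: sum.cong)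
  have Hchar: "\<omega> \<in> ?H \<longleftrightarrow> \<omega> \<in> space Q \<and> (\<forall>m\<in>{1..k}. \<tau> m \<omega> = l' m) \<and> (\<forall>m\<in>{1..k}. X (s m) \<omega> = ih m)" for \<omega>
    using obs[of \<omega>] by auto
  have H: "?H = TE k S1 \<inter> XE (s k) Sx"
    by (rule set_eqI, subst Hchar) (auto simp: TE_def XE_def S1_def Sx_def smono)
  have NH: "?Num \<inter> ?H = (TE k S1 \<inter> ?L) \<inter> (XE (s k) Sx \<inter> {\<omega>\<in>space Q. X (s k + l) \<omega> = j})"
  proof -
    have "?Num \<inter> ?H = ?H \<inter> ?L \<inter> {\<omega>\<in>space Q. X (s k + l) \<omega> = j}"
      using obs by (auto simp: obs_Suc)
    then show ?thesis unfolding H by blast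
  qed
  have Sxk: "\<forall>h\<in>Sx. h (s k) = ih k" using k by (auto simp: Sx_def)
  have LHS: "cprob Q ?Num ?H = c"
  proof -
    have "prob (?Num \<inter> ?H) = prob (TE k S1) * prob ?L * (mpow P l (ih k) j * prob (XE (s k) Sx))"
      unfolding NH XE_add indep3 unfolding XE_add[symmetric] multistep[OF Sxk] ..
    moreover have "prob ?H = prob (TE k S1) * prob (XE (s k) Sx)" unfolding H indep_TX ..
    moreover from this pos have "prob (TE k S1) \<noteq> 0" "prob (XE (s k) Sx) \<noteq> 0" by auto
    ultimately show ?thesis unfolding cprob_def c_def by (simp add: field_simps)
  qed
  let ?B = "\<lambda>t. TE k (ST t0 k t) \<inter> XE t {h. h t = ih k}"
  let ?A = "\<lambda>t. (TE k (ST t0 k t) \<inter> ?L) \<inter> (XE t {h. h t = ih k} \<inter> {\<omega>\<in>space Q. X (t + l) \<omega> = j})"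
  have NB: "?Num \<inter> ?B t = ?A t" for t
    by (auto simp: TE_def XE_def ST_def obs_Suc obs_time_def sum_restrict_sub add.assoc simp del: sum.atLeast_Suc_atMost_Suc_shift)
  have U: "?Num \<inter> ?Y = (\<Union>t. ?A t)"
    unfolding Ydecomp using NB by blast
  have "prob (\<Union>t\<in>UNIV. ?A t) = c * prob (\<Union>t\<in>UNIV. ?B t)"
  proof (rule PROPc)
    show "disjoint_family_on ?A UNIV"
      using Ydisj[of k t0 "\<lambda>t. ?L \<inter> (XE t {h. h t = ih k} \<inter> {\<omega>\<in>space Q. X (t + l) \<omega> = j})"] by (simp add: Int_assoc)
    show "disjoint_family_on ?B UNIV" by (rule Ydisj)
    fix t :: nat
    have "\<forall>h\<in>{h. h t = ih k}. h t = ih k" by simp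
    note ms = multistep[OF this]
    show "prob (?A t) = c * prob (?B t)"
      unfolding XE_add indep3 unfolding XE_add[symmetric] ms indep_TX c_def by simp
  qed (auto simp: c0)
  then have "prob (?Num \<inter> ?Y) = c * prob ?Y" unfolding U Ydecomp[symmetric] .
  moreover have "prob ?Y > 0"
  proof -
    have "?H \<subseteq> ?Y" using k by auto
    then have "prob ?H \<le> prob ?Y" using Yev by (intro finite_measure_mono) auto
    then show ?thesis using pos by simp
  qed
  ultimately have "cprob Q ?Num ?Y = c" unfolding cprob_def by simp
  then show ?thesis using LHS by simp
qed

end


theorem lemma1:
  fixes M :: "'a measure" and N :: "'z measure"
    and Z :: "'a \<Rightarrow> 'z" and K :: "'z \<Rightarrow> 'a measure" and Zs :: "'z set"
    and X :: "nat \<Rightarrow> 'a \<Rightarrow> 's::finite" and P :: "'z \<Rightarrow> 's \<Rightarrow> 's \<Rightarrow> real"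
    and t0 :: nat and \<tau> :: "nat \<Rightarrow> 'a \<Rightarrow> nat"
  defines "T \<equiv> obs_time t0 \<tau>"
  defines "Y \<equiv> (\<lambda>k \<omega>. X (T k \<omega>) \<omega>)"
  assumes M: "prob_space M"
    and Zmeas: "Z \<in> measurable M N"
    and Xmeas: "\<And>t. X t \<in> measurable M (count_space UNIV)"
    and taumeas: "\<And>k. \<tau> k \<in> measurable M (count_space UNIV)"
    and taupos: "\<And>k \<omega>. k \<ge> 1 \<Longrightarrow> \<omega> \<in> space M \<Longrightarrow> \<tau> k \<omega> \<ge> 1"
    \<comment> \<open>K is a regular conditional probability of M given Z\<close>
    and Kprob: "\<And>z. prob_space (K z)"
    and Ksets: "\<And>z. sets (K z) = sets M"
    and Kmeas: "\<And>A. A \<in> sets M \<Longrightarrow> (\<lambda>z. measure (K z) A) \<in> borel_measurable N"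
    and Kdis: "\<And>A B. A \<in> sets M \<Longrightarrow> B \<in> sets N \<Longrightarrow>
                 measure M (A \<inter> Z -` B \<inter> space M)
                 = (\<integral>z. indicator B z * measure (K z) A \<partial>distr M N Z)"
    \<comment> \<open>Zs is the support of Z (a set of full Z-measure)\<close>
    and Zs_sets: "Zs \<in> sets N"
    and Zs_full: "measure M (Z -` Zs \<inter> space M) = 1"
    \<comment> \<open>(i)\<close>
    and markov: "\<And>z. z \<in> Zs \<Longrightarrow> hom_markov1 (K z) X (P z)"
    and irred: "\<And>z. z \<in> Zs \<Longrightarrow> irreducible_mat (P z)"
    and aper: "\<And>z. z \<in> Zs \<Longrightarrow> aperiodic_mat (P z)"
    \<comment> \<open>(iii)\<close>
    and indepX: "\<And>z. z \<in> Zs \<Longrightarrow>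
       prob_space.indep_set (K z)
         {(\<lambda>\<omega>. restrict (\<lambda>k. \<tau> k \<omega>) {1..}) -` A \<inter> space M | A. A \<in> sets (Pi\<^sub>M {1..} (\<lambda>_. count_space (UNIV::nat set)))}
         {(\<lambda>\<omega> t. X t \<omega>) -` B \<inter> space M | B. B \<in> sets (Pi\<^sub>M (UNIV::nat set) (\<lambda>_. count_space (UNIV::'s set)))}"
    \<comment> \<open>(iv)\<close>
    and indeptau: "\<And>z. z \<in> Zs \<Longrightarrow> prob_space.indep_vars (K z) (\<lambda>_. count_space UNIV) \<tau> {1..}"
    and identtau: "\<And>z k. z \<in> Zs \<Longrightarrow> k \<ge> 1 \<Longrightarrow>
       distr (K z) (count_space UNIV) (\<tau> k) = distr (K z) (count_space UNIV) (\<tau> 1)"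
  shows
    \<comment> \<open>(a)\<close>
    "(\<forall>z\<in>Zs. \<forall>k\<ge>1. \<forall>(ih::nat \<Rightarrow> 's) (l'::nat \<Rightarrow> nat) j l.
        (\<forall>m\<in>{1..k}. l' m \<ge> 1) \<longrightarrow> l \<ge> 1 \<longrightarrow>
        measure (K z) {\<omega>\<in>space M. \<forall>m\<in>{1..k}. Y m \<omega> = ih m \<and> \<tau> m \<omega> = l' m} > 0 \<longrightarrow>
        cprob (K z) {\<omega>\<in>space M. Y (Suc k) \<omega> = j \<and> \<tau> (Suc k) \<omega> = l}
                    {\<omega>\<in>space M. \<forall>m\<in>{1..k}. Y m \<omega> = ih m \<and> \<tau> m \<omega> = l' m}
        = cprob (K z) {\<omega>\<in>space M. Y (Suc k) \<omega> = j \<and> \<tau> (Suc k) \<omega> = l}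
                      {\<omega>\<in>space M. Y k \<omega> = ih k})
     \<and>
    \<comment> \<open>(b)\<close>
     (\<forall>z\<in>Zs. \<forall>t t' k i j. t < t' \<longrightarrow>
        measure (K z) {\<omega>\<in>space M. X (T k \<omega>) \<omega> = i \<and> T (Suc k) \<omega> = t' \<and> T k \<omega> = t} > 0 \<longrightarrow>
        cprob (K z) {\<omega>\<in>space M. X (T (Suc k) \<omega>) \<omega> = j}
                    {\<omega>\<in>space M. X (T k \<omega>) \<omega> = i \<and> T (Suc k) \<omega> = t' \<and> T k \<omega> = t}
        = mpow (P z) (t' - t) i j)
     \<and>
    \<comment> \<open>(c)\<close>
     (\<forall>z\<in>Zs. \<forall>k k' i l.
        measure (K z) {\<omega>\<in>space M. Y k \<omega> = i} > 0 \<longrightarrow>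
        measure (K z) {\<omega>\<in>space M. Y k' \<omega> = i} > 0 \<longrightarrow>
        cprob (K z) {\<omega>\<in>space M. \<tau> (Suc k) \<omega> = l} {\<omega>\<in>space M. Y k \<omega> = i}
        = cprob (K z) {\<omega>\<in>space M. \<tau> (Suc k') \<omega> = l} {\<omega>\<in>space M. Y k' \<omega> = i})"
proof -
  have sp: "space (K z) = space M" for z using sets_eq_imp_space_eq[OF Ksets] .
  have LSz: "LS (K z) X \<tau> (P z)" if z: "z \<in> Zs" for z
  proof (intro LS.intro LS_axioms.intro)
    show "prob_space (K z)" by (rule Kprob)
    show "X t \<in> measurable (K z) (count_space UNIV)" for t
      by (subst measurable_cong_sets[OF Ksets[of z] refl]) (rule Xmeas)
    show "\<tau> k \<in> measurable (K z) (count_space UNIV)" for k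
      by (subst measurable_cong_sets[OF Ksets[of z] refl]) (rule taumeas)
    show "hom_markov1 (K z) X (P z)" by (rule markov[OF z])
    show "prob_space.indep_set (K z)
         {(\<lambda>\<omega>. restrict (\<lambda>k. \<tau> k \<omega>) {1..}) -` A \<inter> space (K z) | A. A \<in> sets (Pi\<^sub>M {1..} (\<lambda>_. count_space (UNIV::nat set)))}
         {(\<lambda>\<omega> t. X t \<omega>) -` B \<inter> space (K z) | B. B \<in> sets (Pi\<^sub>M (UNIV::nat set) (\<lambda>_. count_space (UNIV::'s set)))}"
      unfolding sp by (rule indepX[OF z])
    show "prob_space.indep_vars (K z) (\<lambda>_. count_space UNIV) \<tau> {1..}" by (rule indeptau[OF z])
  qed
  have tau_eq: "measure (K z) {\<omega>\<in>space M. \<tau> m \<omega> = l} = measure (K z) {\<omega>\<in>space M. \<tau> 1 \<omega> = l}"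
    if z: "z \<in> Zs" and m: "m \<ge> 1" for z m l
  proof -
    have meas: "\<tau> m' \<in> measurable (K z) (count_space UNIV)" for m'
      by (subst measurable_cong_sets[OF Ksets[of z] refl]) (rule taumeas)
    have e: "measure (K z) {\<omega>\<in>space M. \<tau> m' \<omega> = l} = measure (distr (K z) (count_space UNIV) (\<tau> m')) {l}" for m'
    proof -
      have "\<tau> m' -` {l} \<inter> space (K z) = {\<omega>\<in>space M. \<tau> m' \<omega> = l}" using sp by auto
      then show ?thesis by (subst measure_distr[OF meas]) auto
    qed
    show ?thesis unfolding e identtau[OF z m] ..
  qed
  show ?thesis unfolding Y_def T_def
    apply (intro conjI ballI allI impI)
    subgoal for z k ih l' j l
      by (rule LS.parta[OF LSz, unfolded sp]) auto
    subgoal for z t t' k i j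
      by (rule LS.partb[OF LSz, unfolded sp]) auto
    subgoal for z k k' i l
    proof -
      assume z: "z \<in> Zs" and p1: "0 < measure (K z) {\<omega> \<in> space M. X (obs_time t0 \<tau> k \<omega>) \<omega> = i}"
        and p2: "0 < measure (K z) {\<omega> \<in> space M. X (obs_time t0 \<tau> k' \<omega>) \<omega> = i}"
      show ?thesis
        using LS.partc[OF LSz[OF z], unfolded sp, OF p1, of l] LS.partc[OF LSz[OF z], unfolded sp, OF p2, of l]
          tau_eq[OF z, of "Suc k" l] tau_eq[OF z, of "Suc k'" l] by simp
    qed
    done
qed

end
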